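(* Over a field of characteristic $0$: the identity $[x_1,x_3\circ x_2]\circ x_4+([x_3,x_1]\circ x_2)\circ x_4=[x_1,(x_3\circ x_4)\circ x_2]+[x_3\circ x_4,x_1]\circ x_2$ ( * ) holds in every differential Poisson algebra $(V,\cdot,\{\cdot,\cdot\},d)$ with respect to $[u,v]=\{u,v\}$ and $u\circ v=u\,d(v)$ (hence on all special GD-algebras), but there exists a GD-algebra on which ( * ) does not hold.
   Context: A differential Poisson algebra is a Poisson algebra (associative commutative product, Lie bracket $\{\cdot,\cdot\}$, Leibniz rule $\{x,yz\}=\{x,y\}z+y\{x,z\}$) with a linear map $d$ which is a derivation of both operations. A GD-algebra is a system $(A,\circ,[\cdot,\cdot])$ such that $(a\circ b)\circ c-a\circ(b\circ c)=(b\circ a)\circ c-b\circ(a\circ c)$, $(a\circ b)\circ c=(a\circ c)\circ b$, $(A,[\cdot,\cdot])$ is a Lie algebra, and $[a,b\circ c]-[c,b\circ a]+[b,a]\circ c-[b,c]\circ a-b\circ[a,c]=0$. *)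

theory Defs
  imports Main "HOL-Library.Function_Algebras"
begin

definition vspace_on :: "('k::field \<Rightarrow> 'v::ab_group_add \<Rightarrow> 'v) \<Rightarrow> 'v set \<Rightarrow> bool" where
  "vspace_on s V \<longleftrightarrow>
     0 \<in> V \<and> (\<forall>x\<in>V. \<forall>y\<in>V. x + y \<in> V) \<and> (\<forall>x\<in>V. - x \<in> V) \<and>
     (\<forall>a. \<forall>x\<in>V. s a x \<in> V) \<and>
     (\<forall>a. \<forall>x\<in>V. \<forall>y\<in>V. s a (x + y) = s a x + s a y) \<and>
     (\<forall>a b. \<forall>x\<in>V. s (a + b) x = s a x + s b x) \<and>
     (\<forall>a b. \<forall>x\<in>V. s a (s b x) = s (a * b) x) \<and>
     (\<forall>x\<in>V. s 1 x = x)"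

definition linear_on :: "('k::field \<Rightarrow> 'v::ab_group_add \<Rightarrow> 'v) \<Rightarrow> 'v set \<Rightarrow> ('v \<Rightarrow> 'v) \<Rightarrow> bool" where
  "linear_on s V f \<longleftrightarrow>
     (\<forall>x\<in>V. f x \<in> V) \<and>
     (\<forall>x\<in>V. \<forall>y\<in>V. f (x + y) = f x + f y) \<and>
     (\<forall>a. \<forall>x\<in>V. f (s a x) = s a (f x))"

definition bilinear_on :: "('k::field \<Rightarrow> 'v::ab_group_add \<Rightarrow> 'v) \<Rightarrow> 'v set \<Rightarrow> ('v \<Rightarrow> 'v \<Rightarrow> 'v) \<Rightarrow> bool" where
  "bilinear_on s V m \<longleftrightarrow>
     (\<forall>x\<in>V. \<forall>y\<in>V. m x y \<in> V) \<and>
     (\<forall>x\<in>V. \<forall>y\<in>V. \<forall>z\<in>V. m (x + y) z = m x z + m y z) \<and>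
     (\<forall>x\<in>V. \<forall>y\<in>V. \<forall>z\<in>V. m x (y + z) = m x y + m x z) \<and>
     (\<forall>a. \<forall>x\<in>V. \<forall>y\<in>V. m (s a x) y = s a (m x y)) \<and>
     (\<forall>a. \<forall>x\<in>V. \<forall>y\<in>V. m x (s a y) = s a (m x y))"

definition lie_algebra_on :: "('k::field \<Rightarrow> 'v::ab_group_add \<Rightarrow> 'v) \<Rightarrow> 'v set \<Rightarrow> ('v \<Rightarrow> 'v \<Rightarrow> 'v) \<Rightarrow> bool" where
  "lie_algebra_on s V br \<longleftrightarrow>
     vspace_on s V \<and> bilinear_on s V br \<and>
     (\<forall>x\<in>V. br x x = 0) \<and>
     (\<forall>x\<in>V. \<forall>y\<in>V. \<forall>z\<in>V. br x (br y z) + br y (br z x) + br z (br x y) = 0)"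

definition diff_poisson_algebra_on ::
  "('k::field \<Rightarrow> 'v::ab_group_add \<Rightarrow> 'v) \<Rightarrow> 'v set \<Rightarrow> ('v \<Rightarrow> 'v \<Rightarrow> 'v) \<Rightarrow> ('v \<Rightarrow> 'v \<Rightarrow> 'v) \<Rightarrow> ('v \<Rightarrow> 'v) \<Rightarrow> bool" where
  "diff_poisson_algebra_on s V mul br d \<longleftrightarrow>
     vspace_on s V \<and> bilinear_on s V mul \<and> lie_algebra_on s V br \<and> linear_on s V d \<and>
     (\<forall>x\<in>V. \<forall>y\<in>V. mul x y = mul y x) \<and>
     (\<forall>x\<in>V. \<forall>y\<in>V. \<forall>z\<in>V. mul (mul x y) z = mul x (mul y z)) \<and>
     (\<forall>x\<in>V. \<forall>y\<in>V. \<forall>z\<in>V. br x (mul y z) = mul (br x y) z + mul y (br x z)) \<and>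
     (\<forall>x\<in>V. \<forall>y\<in>V. d (mul x y) = mul (d x) y + mul x (d y)) \<and>
     (\<forall>x\<in>V. \<forall>y\<in>V. d (br x y) = br (d x) y + br x (d y))"

definition gd_algebra_on ::
  "('k::field \<Rightarrow> 'v::ab_group_add \<Rightarrow> 'v) \<Rightarrow> 'v set \<Rightarrow> ('v \<Rightarrow> 'v \<Rightarrow> 'v) \<Rightarrow> ('v \<Rightarrow> 'v \<Rightarrow> 'v) \<Rightarrow> bool" where
  "gd_algebra_on s V circ br \<longleftrightarrow>
     vspace_on s V \<and> bilinear_on s V circ \<and> lie_algebra_on s V br \<and>
     (\<forall>a\<in>V. \<forall>b\<in>V. \<forall>c\<in>V.
        circ (circ a b) c - circ a (circ b c) = circ (circ b a) c - circ b (circ a c)) \<and>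
     (\<forall>a\<in>V. \<forall>b\<in>V. \<forall>c\<in>V. circ (circ a b) c = circ (circ a c) b) \<and>
     (\<forall>a\<in>V. \<forall>b\<in>V. \<forall>c\<in>V.
        br a (circ b c) - br c (circ b a) + circ (br b a) c - circ (br b c) a - circ b (br a c) = 0)"

definition identity_star :: "('v::ab_group_add \<Rightarrow> 'v \<Rightarrow> 'v) \<Rightarrow> ('v \<Rightarrow> 'v \<Rightarrow> 'v) \<Rightarrow> 'v \<Rightarrow> 'v \<Rightarrow> 'v \<Rightarrow> 'v \<Rightarrow> bool" where
  "identity_star circ br x1 x2 x3 x4 \<longleftrightarrow>
     circ (br x1 (circ x3 x2)) x4 + circ (circ (br x3 x1) x2) x4
     = br x1 (circ (circ x3 x4) x2) + circ (br (circ x3 x4) x1) x2"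

end

theory Submission
  imports Defs
begin

lemma part1:
  assumes D: "diff_poisson_algebra_on s V m b d"
    and a: "x1 \<in> V" and x2: "x2 \<in> V" and c: "x3 \<in> V" and x4: "x4 \<in> V"
  shows "identity_star (\<lambda>u v. m u (d v)) b x1 x2 x3 x4"
proof -
  have addV: "\<And>x y. x \<in> V \<Longrightarrow> y \<in> V \<Longrightarrow> x + y \<in> V"
    using D by (auto simp: diff_poisson_algebra_on_def vspace_on_def)
  have zV: "0 \<in> V" and negV: "\<And>x. x \<in> V \<Longrightarrow> - x \<in> V"
    using D by (auto simp: diff_poisson_algebra_on_def vspace_on_def)
  have mV: "\<And>x y. x \<in> V \<Longrightarrow> y \<in> V \<Longrightarrow> m x y \<in> V"
    and madd1: "\<And>x y z. x \<in> V \<Longrightarrow> y \<in> V \<Longrightarrow> z \<in> V \<Longrightarrow> m (x + y) z = m x z + m y z"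
    using D by (auto simp: diff_poisson_algebra_on_def bilinear_on_def)
  have bV: "\<And>x y. x \<in> V \<Longrightarrow> y \<in> V \<Longrightarrow> b x y \<in> V"
    and badd1: "\<And>x y z. x \<in> V \<Longrightarrow> y \<in> V \<Longrightarrow> z \<in> V \<Longrightarrow> b (x + y) z = b x z + b y z"
    and badd2: "\<And>x y z. x \<in> V \<Longrightarrow> y \<in> V \<Longrightarrow> z \<in> V \<Longrightarrow> b x (y + z) = b x y + b x z"
    and bxx: "\<And>x. x \<in> V \<Longrightarrow> b x x = 0"
    using D by (auto simp: diff_poisson_algebra_on_def lie_algebra_on_def bilinear_on_def)
  have dV: "\<And>x. x \<in> V \<Longrightarrow> d x \<in> V"
    using D by (auto simp: diff_poisson_algebra_on_def linear_on_def)
  have comm: "\<And>x y. x \<in> V \<Longrightarrow> y \<in> V \<Longrightarrow> m x y = m y x"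
    and assoc: "\<And>x y z. x \<in> V \<Longrightarrow> y \<in> V \<Longrightarrow> z \<in> V \<Longrightarrow> m (m x y) z = m x (m y z)"
    and leib: "\<And>x y z. x \<in> V \<Longrightarrow> y \<in> V \<Longrightarrow> z \<in> V \<Longrightarrow> b x (m y z) = m (b x y) z + m y (b x z)"
    using D by (auto simp: diff_poisson_algebra_on_def)
  have m0: "m 0 y = 0" if "y \<in> V" for y
  proof -
    have "m (0 + 0) y = m 0 y + m 0 y" using madd1 zV that by blast
    then show ?thesis by simp
  qed
  have mneg: "m (- x) y = - m x y" if "x \<in> V" "y \<in> V" for x y
  proof -
    have "m (x + - x) y = m x y + m (- x) y" using madd1 negV that by blast
    then have "0 = m x y + m (- x) y" using m0 that by simp
    then show ?thesis by (simp add: eq_neg_iff_add_eq_0 add.commute)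
  qed
  have bneg: "b x y = - b y x" if "x \<in> V" "y \<in> V" for x y
  proof -
    have "0 = b (x + y) (x + y)" using bxx addV that by simp
    also have "\<dots> = b x (x + y) + b y (x + y)" using badd1 addV that by blast
    also have "\<dots> = (b x x + b x y) + (b y x + b y y)" using badd2 that by simp
    finally have "0 = b x y + b y x" using bxx that by simp
    then show ?thesis by (simp add: eq_neg_iff_add_eq_0)
  qed
  define p where "p = d x2"
  define q where "q = d x4"
  have p: "p \<in> V" and q: "q \<in> V" using dV x2 x4 by (auto simp: p_def q_def)
  have mcp: "m x3 p \<in> V" and mcq: "m x3 q \<in> V" using mV c p q by auto
  have bac: "b x1 x3 \<in> V" and bap: "b x1 p \<in> V" and baq: "b x1 q \<in> V" using bV a c p q by auto
  have h1: "b x1 (m x3 p) = m (b x1 x3) p + m x3 (b x1 p)" using leib a c p by blast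
  have h2: "m (b x3 x1) p = - m (b x1 x3) p" using bneg[OF c a] mneg[OF bac p] by simp
  have "m (b x1 (m x3 p)) q + m (m (b x3 x1) p) q
        = m (m (b x1 x3) p + m x3 (b x1 p)) q + m (- m (b x1 x3) p) q" using h1 h2 by simp
  also have "\<dots> = m (m (b x1 x3) p) q + m (m x3 (b x1 p)) q - m (m (b x1 x3) p) q"
    using madd1 mneg mV bac p c bap q by simp
  also have "\<dots> = m (m x3 (b x1 p)) q" by simp
  also have "\<dots> = m x3 (m (b x1 p) q)" using assoc c bap q by blast
  also have "\<dots> = m x3 (m q (b x1 p))" using comm bap q by simp
  also have "\<dots> = m (m x3 q) (b x1 p)" using assoc c bap q by simp
  finally have L: "m (b x1 (m x3 p)) q + m (m (b x3 x1) p) q = m (m x3 q) (b x1 p)" .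
  have bamcq: "b x1 (m x3 q) \<in> V" using bV a mcq by blast
  have h3: "b x1 (m (m x3 q) p) = m (b x1 (m x3 q)) p + m (m x3 q) (b x1 p)" using leib a mcq p by blast
  have h4: "m (b (m x3 q) x1) p = - m (b x1 (m x3 q)) p" using bneg[OF mcq a] mneg[OF bamcq p] by simp
  have R: "b x1 (m (m x3 q) p) + m (b (m x3 q) x1) p = m (m x3 q) (b x1 p)"
    using h3 h4 by simp
  show ?thesis unfolding identity_star_def using L R by (simp add: p_def q_def)
qed

definition cex_circ :: "(nat \<Rightarrow> 'k::field) \<Rightarrow> (nat \<Rightarrow> 'k) \<Rightarrow> (nat \<Rightarrow> 'k)" where
  "cex_circ f g = (\<lambda>n. if n = 1 then f 2 * g 0 else if n = 2 then f 0 * g 0 else 0)"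
definition cex_br :: "(nat \<Rightarrow> 'k::field) \<Rightarrow> (nat \<Rightarrow> 'k) \<Rightarrow> (nat \<Rightarrow> 'k)" where
  "cex_br f g = (\<lambda>n. if n = 1 then f 0 * g 1 - f 1 * g 0 else 0)"

lemma part2:
  "gd_algebra_on (\<lambda>a f. (\<lambda>n. a * f n)) (UNIV :: (nat \<Rightarrow> 'k::field_char_0) set) cex_circ cex_br"
  unfolding gd_algebra_on_def vspace_on_def bilinear_on_def lie_algebra_on_def
  by (auto simp: fun_eq_iff cex_circ_def cex_br_def algebra_simps)

lemma part2b:
  "\<not> identity_star cex_circ cex_br (\<lambda>n. if n = 0 then 1 else 0 :: 'k::field_char_0)
       (\<lambda>n. if n = 0 then 1 else 0) (\<lambda>n. if n = 0 then 1 else 0) (\<lambda>n. if n = 0 then 1 else 0)"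
  unfolding identity_star_def
proof
  assume H: "cex_circ (cex_br (\<lambda>n. if n = 0 then 1 else 0 :: 'k) (cex_circ (\<lambda>n. if n = 0 then 1 else 0) (\<lambda>n. if n = 0 then 1 else 0))) (\<lambda>n. if n = 0 then 1 else 0) +
    cex_circ (cex_circ (cex_br (\<lambda>n. if n = 0 then 1 else 0) (\<lambda>n. if n = 0 then 1 else 0)) (\<lambda>n. if n = 0 then 1 else 0)) (\<lambda>n. if n = 0 then 1 else 0) =
    cex_br (\<lambda>n. if n = 0 then 1 else 0) (cex_circ (cex_circ (\<lambda>n. if n = 0 then 1 else 0) (\<lambda>n. if n = 0 then 1 else 0)) (\<lambda>n. if n = 0 then 1 else 0)) +
    cex_circ (cex_br (cex_circ (\<lambda>n. if n = 0 then 1 else 0) (\<lambda>n. if n = 0 then 1 else 0)) (\<lambda>n. if n = 0 then 1 else 0)) (\<lambda>n. if n = 0 then 1 else 0)"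
  from fun_cong[OF H, of 1] show False by (simp add: cex_circ_def cex_br_def)
qed

theorem mainTheorem19:
  fixes s :: "'k::field_char_0 \<Rightarrow> 'v::ab_group_add \<Rightarrow> 'v"
  shows "(\<forall>V mul br d. diff_poisson_algebra_on s V mul br d \<longrightarrow>
            (\<forall>x1\<in>V. \<forall>x2\<in>V. \<forall>x3\<in>V. \<forall>x4\<in>V.
               identity_star (\<lambda>u v. mul u (d v)) br x1 x2 x3 x4))
       \<and> (\<exists>(V :: (nat \<Rightarrow> 'k) set) circ br.
            gd_algebra_on (\<lambda>a f. (\<lambda>n. a * f n)) V circ br \<and>
            \<not> (\<forall>x1\<in>V. \<forall>x2\<in>V. \<forall>x3\<in>V. \<forall>x4\<in>V. identity_star circ br x1 x2 x3 x4))"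
  using part1 part2 part2b by blast

end
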